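(* Let $\Pi$ be a finite set of propositional variables and let $M^1=\langle W^1,\mathcal{N}^1,V^1\rangle$, $M^2=\langle W^2,\mathcal{N}^2,V^2\rangle$ be nIML1-models for the language over $\Pi$. Let $n\geq 0$. For every $w_1\in W^1$ and $w_2\in W^2$ the following are equivalent: (1) $w_1$ and $w_2$ are $n$-bisimilar; (2) $w_1$ and $w_2$ agree on all formulas (over $\Pi$) of degree at most $n$, i.e. for each such formula $\varphi$, $w_1\Vdash_{M^1}\varphi$ iff $w_2\Vdash_{M^2}\varphi$.
   Context: Formulas over $\Pi$ are built from the variables in $\Pi$ and $\bot$ using binary $\land,\lor,\rightarrow,\rightsquigarrow$ and unary $\Delta$ ($\sim\varphi$ abbreviates $\varphi\rightsquigarrow\bot$). An nIML1-model for this language is a triple $\langle W,\mathcal{N},V\rangle$ with $W\neq\emptyset$, $\mathcal{N}:W\to P(P(W))$ satisfying for all $w$: (a) $w\in\bigcap\mathcal{N}_w$; (b) $\bigcap\mathcal{N}_w\in\mathcal{N}_w$; (c) $u\in\bigcap\mathcal{N}_w\Rightarrow\bigcap\mathcal{N}_u\subseteq\bigcap\mathcal{N}_w$; (d) $\bigcap\mathcal{N}_w\subseteq X\subseteq\bigcup\mathcal{N}_w\Rightarrow X\in\mathcal{N}_w$; (e) $u\in\bigcap\mathcal{N}_w\Rightarrow\bigcup\mathcal{N}_u\subseteq\bigcup\mathcal{N}_w$ ($\bigcap\mathcal{N}_w$, $\bigcup\mathcal{N}_w$ the intersection and union of the family $\mathcal{N}_w$), and $V:\Pi\to P(W)$ with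 $w\in V(q)\Rightarrow\bigcap\mathcal{N}_w\subseteq V(q)$. Forcing: atoms via $V$; $\bot$ never; $\land,\lor$ pointwise; $w\Vdash\varphi\rightarrow\psi$ iff every $v\in\bigcap\mathcal{N}_w$ has $v\nVdash\varphi$ or $v\Vdash\psi$; $w\Vdash\varphi\rightsquigarrow\psi$ iff every $v\in\bigcup\mathcal{N}_w$ has $v\nVdash\varphi$ or $v\Vdash\psi$; $w\Vdash\Delta\varphi$ iff every $v\in\bigcup\mathcal{N}_w$ has $v\Vdash\varphi$. Degree: $deg(q)=deg(\bot)=0$; $deg(\varphi\land\psi)=deg(\varphi\lor\psi)=\max(deg\varphi,deg\psi)$; $deg(\varphi\rightarrow\psi)=deg(\varphi\rightsquigarrow\psi)=1+\max(deg\varphi,deg\psi)$; $deg(\Delta\varphi)=1+deg\varphi$. Worlds $w_1\in W^1$, $w_2\in W^2$ are $n$-bisimilar if there are relations $R_n\subseteq R_{n-1}\subseteq\dots\subseteq R_0\subseteq W^1\times W^2$ such that: $w_1R_nw_2$; whenever $xR_0y$, $x$ and $y$ force the same propositional variables; and for each $i$ with $i+1\leq n$ and all $x_1,x_2$ with $x_1R_{i+1}x_2$: for every $y\in\bigcap\mathcal{N}^2_{x_2}$ there is $x\in\bigcap\mathcal{N}^1_{x_1}$ with $xR_iy$; for every $y\in\bigcup\mathcal{N}^2_{x_2}$ there is $x\in\bigcup\mathcal{N}^1_{x_1}$ with $xR_iy$; for every $x\in\bigcap\mathcal{N}^1_{x_1}$ there is $y\in\bigcap\mathcal{N}^2_{x_2}$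 with $xR_iy$; for every $x\in\bigcup\mathcal{N}^1_{x_1}$ there is $y\in\bigcup\mathcal{N}^2_{x_2}$ with $xR_iy$. *)

theory Defs
  imports Main
begin

datatype 'p fm =
    Atom 'p
  | Bot
  | And "'p fm" "'p fm"
  | Or "'p fm" "'p fm"
  | Imp "'p fm" "'p fm"
  | SImp "'p fm" "'p fm"
  | Delta "'p fm"

fun atoms :: "'p fm \<Rightarrow> 'p set" where
  "atoms (Atom q) = {q}"
| "atoms Bot = {}"
| "atoms (And a b) = atoms a \<union> atoms b"
| "atoms (Or a b) = atoms a \<union> atoms b"
| "atoms (Imp a b) = atoms a \<union> atoms b"
| "atoms (SImp a b) = atoms a \<union> atoms b"
| "atoms (Delta a) = atoms a"

fun deg :: "'p fm \<Rightarrow> nat" where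
  "deg (Atom q) = 0"
| "deg Bot = 0"
| "deg (And a b) = max (deg a) (deg b)"
| "deg (Or a b) = max (deg a) (deg b)"
| "deg (Imp a b) = 1 + max (deg a) (deg b)"
| "deg (SImp a b) = 1 + max (deg a) (deg b)"
| "deg (Delta a) = 1 + deg a"

text \<open>nIML1-model over the variable set Pi: W, neighbourhood function N, valuation V
  (V is only meaningful on Pi).\<close>
definition nIML1_model :: "'p set \<Rightarrow> 'w set \<Rightarrow> ('w \<Rightarrow> 'w set set) \<Rightarrow> ('p \<Rightarrow> 'w set) \<Rightarrow> bool" where
  "nIML1_model Pi W N V \<longleftrightarrow>
     W \<noteq> {} \<and>
     (\<forall>w\<in>W. N w \<subseteq> Pow W) \<and>
     (\<forall>w\<in>W. w \<in> \<Inter>(N w)) \<and>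
     (\<forall>w\<in>W. \<Inter>(N w) \<in> N w) \<and>
     (\<forall>w\<in>W. \<forall>u. u \<in> \<Inter>(N w) \<longrightarrow> \<Inter>(N u) \<subseteq> \<Inter>(N w)) \<and>
     (\<forall>w\<in>W. \<forall>X. \<Inter>(N w) \<subseteq> X \<and> X \<subseteq> \<Union>(N w) \<longrightarrow> X \<in> N w) \<and>
     (\<forall>w\<in>W. \<forall>u. u \<in> \<Inter>(N w) \<longrightarrow> \<Union>(N u) \<subseteq> \<Union>(N w)) \<and>
     (\<forall>q\<in>Pi. V q \<subseteq> W) \<and>
     (\<forall>q\<in>Pi. \<forall>w\<in>W. w \<in> V q \<longrightarrow> \<Inter>(N w) \<subseteq> V q)"

fun forces :: "('w \<Rightarrow> 'w set set) \<Rightarrow> ('p \<Rightarrow> 'w set) \<Rightarrow> 'w \<Rightarrow> 'p fm \<Rightarrow> bool" where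
  "forces N V w (Atom q) = (w \<in> V q)"
| "forces N V w Bot = False"
| "forces N V w (And a b) = (forces N V w a \<and> forces N V w b)"
| "forces N V w (Or a b) = (forces N V w a \<or> forces N V w b)"
| "forces N V w (Imp a b) = (\<forall>v\<in>\<Inter>(N w). \<not> forces N V v a \<or> forces N V v b)"
| "forces N V w (SImp a b) = (\<forall>v\<in>\<Union>(N w). \<not> forces N V v a \<or> forces N V v b)"
| "forces N V w (Delta a) = (\<forall>v\<in>\<Union>(N w). forces N V v a)"

definition n_bisimilar ::
  "'p set \<Rightarrow> 'a set \<Rightarrow> ('a \<Rightarrow> 'a set set) \<Rightarrow> ('p \<Rightarrow> 'a set) \<Rightarrow>
   'b set \<Rightarrow> ('b \<Rightarrow> 'b set set) \<Rightarrow> ('p \<Rightarrow> 'b set) \<Rightarrow> nat \<Rightarrow> 'a \<Rightarrow> 'b \<Rightarrow> bool" where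
  "n_bisimilar Pi W1 N1 V1 W2 N2 V2 n w1 w2 \<longleftrightarrow>
    (\<exists>R :: nat \<Rightarrow> ('a \<times> 'b) set.
       R 0 \<subseteq> W1 \<times> W2 \<and>
       (\<forall>i<n. R (Suc i) \<subseteq> R i) \<and>
       (w1, w2) \<in> R n \<and>
       (\<forall>x y. (x, y) \<in> R 0 \<longrightarrow> (\<forall>q\<in>Pi. x \<in> V1 q \<longleftrightarrow> y \<in> V2 q)) \<and>
       (\<forall>i. i + 1 \<le> n \<longrightarrow> (\<forall>x1 x2. (x1, x2) \<in> R (i + 1) \<longrightarrow>
          (\<forall>y\<in>\<Inter>(N2 x2). \<exists>x\<in>\<Inter>(N1 x1). (x, y) \<in> R i) \<and>
          (\<forall>y\<in>\<Union>(N2 x2). \<exists>x\<in>\<Union>(N1 x1). (x, y) \<in> R i) \<and>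
          (\<forall>x\<in>\<Inter>(N1 x1). \<exists>y\<in>\<Inter>(N2 x2). (x, y) \<in> R i) \<and>
          (\<forall>x\<in>\<Union>(N1 x1). \<exists>y\<in>\<Union>(N2 x2). (x, y) \<in> R i))))"

end

theory Submission imports Defs begin

definition th :: "'p set \<Rightarrow> nat \<Rightarrow> ('w \<Rightarrow> 'w set set) \<Rightarrow> ('p \<Rightarrow> 'w set) \<Rightarrow> 'w \<Rightarrow> 'p fm set" where
  "th Pi i N V w = {\<phi>. atoms \<phi> \<subseteq> Pi \<and> deg \<phi> \<le> i \<and> forces N V w \<phi>}"

definition lst :: "'a set \<Rightarrow> 'a list" where "lst S = (SOME xs. set xs = S)"

lemma set_lst: "finite S \<Longrightarrow> set (lst S) = S"
  unfolding lst_def by (rule someI_ex) (rule finite_list)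

lemma foldr_Or:
  "forces N V w (foldr Or xs Bot) \<longleftrightarrow> (\<exists>\<psi>\<in>set xs. forces N V w \<psi>)"
  "atoms (foldr Or xs Bot) = \<Union>(atoms ` set xs)"
  "(\<forall>\<psi>\<in>set xs. deg \<psi> \<le> i) \<Longrightarrow> deg (foldr Or xs Bot) \<le> i"
  by (induct xs) auto

lemma foldr_And:
  "forces N V w (foldr And xs c) \<longleftrightarrow> forces N V w c \<and> (\<forall>\<psi>\<in>set xs. forces N V w \<psi>)"
  "atoms (foldr And xs c) = atoms c \<union> \<Union>(atoms ` set xs)"
  "deg c \<le> i \<Longrightarrow> (\<forall>\<psi>\<in>set xs. deg \<psi> \<le> i) \<Longrightarrow> deg (foldr And xs c) \<le> i"
  by (induct xs) auto

lemma model_facts: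
  assumes "nIML1_model Pi W N V" "w \<in> W"
  shows "\<Inter>(N w) \<subseteq> W" "\<Union>(N w) \<subseteq> W" "w \<in> \<Inter>(N w)" "\<Inter>(N w) \<subseteq> \<Union>(N w)"
proof -
  have a: "\<Inter>(N w) \<in> N w" "N w \<subseteq> Pow W" "w \<in> \<Inter>(N w)" using assms unfolding nIML1_model_def by auto
  then show "\<Union>(N w) \<subseteq> W" "w \<in> \<Inter>(N w)" "\<Inter>(N w) \<subseteq> \<Union>(N w)" by auto
  then show "\<Inter>(N w) \<subseteq> W" by blast
qed

lemma heredity:
  assumes m: "nIML1_model Pi W N V"
  shows "w \<in> W \<Longrightarrow> atoms \<phi> \<subseteq> Pi \<Longrightarrow> forces N V w \<phi> \<Longrightarrow> v \<in> \<Inter>(N w) \<Longrightarrow> forces N V v \<phi>"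
proof -
  have mA: "\<forall>q\<in>Pi. \<forall>w\<in>W. w \<in> V q \<longrightarrow> \<Inter>(N w) \<subseteq> V q"
    using m unfolding nIML1_model_def by (elim conjE)
  have mC: "\<forall>w\<in>W. \<forall>u. u \<in> \<Inter>(N w) \<longrightarrow> \<Inter>(N u) \<subseteq> \<Inter>(N w)"
    using m unfolding nIML1_model_def by (elim conjE)
  have mE: "\<forall>w\<in>W. \<forall>u. u \<in> \<Inter>(N w) \<longrightarrow> \<Union>(N u) \<subseteq> \<Union>(N w)"
    using m unfolding nIML1_model_def by (elim conjE)
  show "w \<in> W \<Longrightarrow> atoms \<phi> \<subseteq> Pi \<Longrightarrow> forces N V w \<phi> \<Longrightarrow> v \<in> \<Inter>(N w) \<Longrightarrow> forces N V v \<phi>"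
  proof (induct \<phi> arbitrary: w v)
    case (Atom q)
    have "q \<in> Pi" "w \<in> V q" using Atom.prems(2,3) by simp_all
    then have "\<Inter>(N w) \<subseteq> V q" using mA Atom.prems(1) by blast
    then show ?case using Atom.prems(4) by simp blast
  next
    case (And a b)
    have "forces N V v a" using And.hyps(1)[of w v] And.prems by simp
    moreover have "forces N V v b" using And.hyps(2)[of w v] And.prems by simp
    ultimately show ?case by simp
  next
    case (Or a b)
    show ?case
    proof (cases "forces N V w a")
      case True
      then have "forces N V v a" using Or.hyps(1)[of w v] Or.prems by simp
      then show ?thesis by simp
    next
      case False
      then have "forces N V w b" using Or.prems(3) by simp
      then have "forces N V v b" using Or.hyps(2)[of w v] Or.prems by simp
      then show ?thesis by simp
    qed
  next
    case Bot then show ?case by simp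
  next
    case (Imp a b)
    have "\<Inter>(N v) \<subseteq> \<Inter>(N w)" using mC Imp.prems(1,4) by blast
    then show ?case using Imp.prems(3) by (simp only: forces.simps) blast
  next
    case (SImp a b)
    have "\<Union>(N v) \<subseteq> \<Union>(N w)" using mE SImp.prems(1,4) by blast
    then show ?case using SImp.prems(3) by (simp only: forces.simps) blast
  next
    case (Delta a)
    have "\<Union>(N v) \<subseteq> \<Union>(N w)" using mE Delta.prems(1,4) by blast
    then show ?case using Delta.prems(3) by (simp only: forces.simps) blast
  qed
qed

lemma th0_eq:
  assumes "{q\<in>Pi. x \<in> V q} = {q\<in>Pi. y \<in> V' q}"
  shows "th Pi 0 N V x = th Pi 0 N' V' y"
proof -
  have "atoms \<phi> \<subseteq> Pi \<longrightarrow> deg \<phi> \<le> 0 \<longrightarrow> (forces N V x \<phi> \<longleftrightarrow> forces N' V' y \<phi>)" for \<phi>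
    using assms by (induct \<phi>) auto
  then show ?thesis unfolding th_def by auto
qed

lemma forces_th:
  assumes "atoms a \<subseteq> Pi" "atoms b \<subseteq> Pi" "deg a \<le> i" "deg b \<le> i"
  shows "forces N V x (Imp a b) \<longleftrightarrow> (\<forall>t\<in>th Pi i N V ` \<Inter>(N x). a \<notin> t \<or> b \<in> t)"
    "forces N V x (SImp a b) \<longleftrightarrow> (\<forall>t\<in>th Pi i N V ` \<Union>(N x). a \<notin> t \<or> b \<in> t)"
    "forces N V x (Delta a) \<longleftrightarrow> (\<forall>t\<in>th Pi i N V ` \<Union>(N x). a \<in> t)"
  using assms unfolding th_def by auto

lemma thSuc_eq:
  assumes A: "{q\<in>Pi. x \<in> V q} = {q\<in>Pi. y \<in> V' q}"
    and I: "th Pi i N V ` \<Inter>(N x) = th Pi i N' V' ` \<Inter>(N' y)"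
    and U: "th Pi i N V ` \<Union>(N x) = th Pi i N' V' ` \<Union>(N' y)"
  shows "th Pi (Suc i) N V x = th Pi (Suc i) N' V' y"
proof -
  have "atoms \<phi> \<subseteq> Pi \<longrightarrow> deg \<phi> \<le> Suc i \<longrightarrow> (forces N V x \<phi> \<longleftrightarrow> forces N' V' y \<phi>)" for \<phi>
  proof (induct \<phi>)
    case (Atom q) then show ?case using A by auto
  next
    case (Imp a b)
    show ?case
    proof (intro impI)
      assume h: "atoms (Imp a b) \<subseteq> Pi" "deg (Imp a b) \<le> Suc i"
      then have c: "atoms a \<subseteq> Pi" "atoms b \<subseteq> Pi" "deg a \<le> i" "deg b \<le> i" by auto
      show "forces N V x (Imp a b) = forces N' V' y (Imp a b)"
        unfolding forces_th(1)[OF c, of N V x] forces_th(1)[OF c, of N' V' y] I ..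
    qed
  next
    case (SImp a b)
    show ?case
    proof (intro impI)
      assume h: "atoms (SImp a b) \<subseteq> Pi" "deg (SImp a b) \<le> Suc i"
      then have c: "atoms a \<subseteq> Pi" "atoms b \<subseteq> Pi" "deg a \<le> i" "deg b \<le> i" by auto
      show "forces N V x (SImp a b) = forces N' V' y (SImp a b)"
        unfolding forces_th(2)[OF c, of N V x] forces_th(2)[OF c, of N' V' y] U ..
    qed
  next
    case (Delta a)
    show ?case
    proof (intro impI)
      assume h: "atoms (Delta a) \<subseteq> Pi" "deg (Delta a) \<le> Suc i"
      then have c: "atoms a \<subseteq> Pi" "atoms a \<subseteq> Pi" "deg a \<le> i" "deg a \<le> i" by auto
      show "forces N V x (Delta a) = forces N' V' y (Delta a)"
        unfolding forces_th(3)[OF c, of N V x] forces_th(3)[OF c, of N' V' y] U ..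
    qed
  qed auto
  then show ?thesis unfolding th_def by auto
qed

lemma fin_factor:
  assumes "finite K" "k1 ` A \<subseteq> K" "k2 ` B \<subseteq> K"
    and e1: "\<And>x x'. x\<in>A \<Longrightarrow> x'\<in>A \<Longrightarrow> k1 x = k1 x' \<Longrightarrow> f1 x = f1 x'"
    and e2: "\<And>x y. x\<in>A \<Longrightarrow> y\<in>B \<Longrightarrow> k1 x = k2 y \<Longrightarrow> f1 x = f2 y"
    and e3: "\<And>y y'. y\<in>B \<Longrightarrow> y'\<in>B \<Longrightarrow> k2 y = k2 y' \<Longrightarrow> f2 y = f2 y'"
  shows "finite (f1 ` A \<union> f2 ` B)"
proof -
  define P where "P k t \<longleftrightarrow> (\<exists>x\<in>A. k1 x = k \<and> t = f1 x) \<or> (\<exists>y\<in>B. k2 y = k \<and> t = f2 y)" for k t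
  define F where "F k = (SOME t. P k t)" for k
  have "f1 ` A \<union> f2 ` B \<subseteq> F ` K"
  proof
    fix t assume "t \<in> f1 ` A \<union> f2 ` B"
    then show "t \<in> F ` K"
    proof
      assume "t \<in> f1 ` A"
      then obtain x where x: "x \<in> A" "t = f1 x" by auto
      have "P (k1 x) (F (k1 x))" unfolding F_def by (rule someI[of _ t]) (use x P_def in auto)
      then have "F (k1 x) = t" unfolding P_def using x e1 e2 by metis
      then show ?thesis using x assms(2) by force
    next
      assume "t \<in> f2 ` B"
      then obtain y where y: "y \<in> B" "t = f2 y" by auto
      have "P (k2 y) (F (k2 y))" unfolding F_def by (rule someI[of _ t]) (use y P_def in auto)
      then have "F (k2 y) = t" unfolding P_def using y e2 e3 by metis
      then show ?thesis using y assms(3) by force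
    qed
  qed
  then show ?thesis using assms(1) finite_surj by blast
qed


lemma th_down: assumes "th Pi (Suc i) N V x = th Pi (Suc i) N' V' y"
  shows "th Pi i N V x = th Pi i N' V' y"
proof -
  have "th Pi i N V x = th Pi (Suc i) N V x \<inter> {\<phi>. deg \<phi> \<le> i}" "th Pi i N' V' y = th Pi (Suc i) N' V' y \<inter> {\<phi>. deg \<phi> \<le> i}"
    unfolding th_def by auto
  then show ?thesis using assms by simp
qed

lemma back_gen:
  assumes fin: "finite (th Pi i N V ` S)"
    and ne: "\<forall>x\<in>S. th Pi i N V x \<noteq> th Pi i N' V' y"
  obtains C D where "finite C" "finite D"
    "\<forall>\<psi>\<in>C \<union> D. atoms \<psi> \<subseteq> Pi \<and> deg \<psi> \<le> i"
    "\<forall>\<psi>\<in>C. forces N' V' y \<psi>" "\<forall>\<psi>\<in>D. \<not> forces N' V' y \<psi>"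
    "\<forall>x\<in>S. (\<exists>\<psi>\<in>C. \<not> forces N V x \<psi>) \<or> (\<exists>\<psi>\<in>D. forces N V x \<psi>)"
proof -
  define Ty where "Ty = th Pi i N' V' y"
  define \<Theta> where "\<Theta> = th Pi i N V ` S"
  define ps where "ps t = (SOME \<psi>. (\<psi> \<in> t \<and> \<psi> \<notin> Ty) \<or> (\<psi> \<notin> t \<and> \<psi> \<in> Ty))" for t
  have ps: "(ps t \<in> t \<and> ps t \<notin> Ty) \<or> (ps t \<notin> t \<and> ps t \<in> Ty)" if "t \<in> \<Theta>" for t
  proof -
    have "t \<noteq> Ty" using that ne unfolding \<Theta>_def Ty_def by auto
    then have "\<exists>\<psi>. (\<psi> \<in> t \<and> \<psi> \<notin> Ty) \<or> (\<psi> \<notin> t \<and> \<psi> \<in> Ty)" by blast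
    then show ?thesis unfolding ps_def by (rule someI_ex)
  qed
  define C where "C = ps ` {t\<in>\<Theta>. ps t \<in> Ty}"
  define D where "D = ps ` {t\<in>\<Theta>. ps t \<notin> Ty}"
  show ?thesis
  proof
    show "finite C" "finite D" using fin unfolding C_def D_def \<Theta>_def by auto
    show "\<forall>\<psi>\<in>C \<union> D. atoms \<psi> \<subseteq> Pi \<and> deg \<psi> \<le> i"
    proof
      fix \<psi> assume "\<psi> \<in> C \<union> D"
      then obtain t where t: "t \<in> \<Theta>" "\<psi> = ps t" unfolding C_def D_def by auto
      then have "\<psi> \<in> t \<or> \<psi> \<in> Ty" using ps by blast
      then show "atoms \<psi> \<subseteq> Pi \<and> deg \<psi> \<le> i" using t(1) unfolding \<Theta>_def Ty_def th_def by auto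
    qed
    show "\<forall>\<psi>\<in>C. forces N' V' y \<psi>" unfolding C_def Ty_def th_def by auto
    show "\<forall>\<psi>\<in>D. \<not> forces N' V' y \<psi>"
    proof
      fix \<psi> assume "\<psi> \<in> D"
      then obtain t where t: "t \<in> \<Theta>" "\<psi> = ps t" "ps t \<notin> Ty" unfolding D_def by auto
      then have "\<psi> \<in> t" using ps by blast
      then have "atoms \<psi> \<subseteq> Pi \<and> deg \<psi> \<le> i" using t(1) unfolding \<Theta>_def th_def by auto
      then show "\<not> forces N' V' y \<psi>" using t(2,3) unfolding Ty_def th_def by auto
    qed
    show "\<forall>x\<in>S. (\<exists>\<psi>\<in>C. \<not> forces N V x \<psi>) \<or> (\<exists>\<psi>\<in>D. forces N V x \<psi>)"
    proof
      fix x assume x: "x \<in> S"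
      define t where "t = th Pi i N V x"
      have t: "t \<in> \<Theta>" using x unfolding t_def \<Theta>_def by auto
      show "(\<exists>\<psi>\<in>C. \<not> forces N V x \<psi>) \<or> (\<exists>\<psi>\<in>D. forces N V x \<psi>)"
      proof (cases "ps t \<in> Ty")
        case True
        then have "ps t \<notin> t" using ps t by blast
        moreover have "atoms (ps t) \<subseteq> Pi \<and> deg (ps t) \<le> i" using True unfolding Ty_def th_def by auto
        ultimately have "\<not> forces N V x (ps t)" unfolding t_def th_def by auto
        moreover have "ps t \<in> C" using True t unfolding C_def by auto
        ultimately show ?thesis by blast
      next
        case False
        then have "ps t \<in> t" using ps t by blast
        then have "forces N V x (ps t)" unfolding t_def th_def by auto
        moreover have "ps t \<in> D" using False t unfolding D_def by auto
        ultimately show ?thesis by blast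
      qed
    qed
  qed
qed

definition BigOr where "BigOr D = foldr Or (lst D) Bot"
definition BigAnd where "BigAnd c C = foldr And (lst C) c"

lemma BigOr: assumes "finite D" "\<forall>\<psi>\<in>D. atoms \<psi> \<subseteq> Pi \<and> deg \<psi> \<le> i"
  shows "forces N V w (BigOr D) \<longleftrightarrow> (\<exists>\<psi>\<in>D. forces N V w \<psi>)"
    "atoms (BigOr D) \<subseteq> Pi" "deg (BigOr D) \<le> i"
  using assms foldr_Or(1)[of N V w "lst D"] foldr_Or(2)[of "lst D"] foldr_Or(3)[of "lst D" i] set_lst[OF assms(1)] unfolding BigOr_def by auto

lemma BigAnd: assumes "finite C" "\<forall>\<psi>\<in>C. atoms \<psi> \<subseteq> Pi \<and> deg \<psi> \<le> i" "c \<in> C"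
  shows "forces N V w (BigAnd c C) \<longleftrightarrow> (\<forall>\<psi>\<in>C. forces N V w \<psi>)"
    "atoms (BigAnd c C) \<subseteq> Pi" "deg (BigAnd c C) \<le> i"
  using assms foldr_And(1)[of N V w "lst C" c] foldr_And(2)[of "lst C" c] foldr_And(3)[of c i "lst C"] set_lst[OF assms(1)] unfolding BigAnd_def by auto

lemma back_int:
  assumes modB: "nIML1_model Pi W' N' V'" and b: "b \<in> W'"
    and aref: "a \<in> \<Inter>(N a)"
    and fin: "finite (th Pi i N V ` \<Inter>(N a))"
    and agree: "th Pi (Suc i) N V a = th Pi (Suc i) N' V' b"
    and y: "y \<in> \<Inter>(N' b)"
  shows "\<exists>x\<in>\<Inter>(N a). th Pi i N V x = th Pi i N' V' y"
proof (rule ccontr)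
  assume "\<not> ?thesis"
  then have ne: "\<forall>x\<in>\<Inter>(N a). th Pi i N V x \<noteq> th Pi i N' V' y" by blast
  obtain C D where CD: "finite C" "finite D"
    "\<forall>\<psi>\<in>C \<union> D. atoms \<psi> \<subseteq> Pi \<and> deg \<psi> \<le> i"
    "\<forall>\<psi>\<in>C. forces N' V' y \<psi>" "\<forall>\<psi>\<in>D. \<not> forces N' V' y \<psi>"
    "\<forall>x\<in>\<Inter>(N a). (\<exists>\<psi>\<in>C. \<not> forces N V x \<psi>) \<or> (\<exists>\<psi>\<in>D. forces N V x \<psi>)"
    using back_gen[OF fin ne] by blast
  define \<delta> where "\<delta> = BigOr D"
  have Dok: "\<forall>\<psi>\<in>D. atoms \<psi> \<subseteq> Pi \<and> deg \<psi> \<le> i" using CD(3) by blast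
  have Cok: "\<forall>\<psi>\<in>C. atoms \<psi> \<subseteq> Pi \<and> deg \<psi> \<le> i" using CD(3) by blast
  note d = BigOr[OF CD(2) Dok, folded \<delta>_def]
  have yd: "\<not> forces N' V' y \<delta>" using d(1)[of N' V' y] CD(5) by blast
  show False
  proof (cases "C = {}")
    case True
    then have "forces N V a \<delta>" using aref CD(6) d(1)[of N V a] by blast
    then have "\<delta> \<in> th Pi (Suc i) N V a" using d(2,3) unfolding th_def by auto
    then have "forces N' V' b \<delta>" using agree unfolding th_def by auto
    then have "forces N' V' y \<delta>" using heredity[OF modB b d(2)] y by blast
    then show False using yd by blast
  next
    case False
    then obtain c where c: "c \<in> C" by blast
    define \<chi> where "\<chi> = BigAnd c C"
    note h = BigAnd[OF CD(1) Cok c, folded \<chi>_def]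
    have "forces N V a (Imp \<chi> \<delta>)" using CD(6) by (simp add: h(1) d(1))
    moreover have "atoms (Imp \<chi> \<delta>) \<subseteq> Pi" "deg (Imp \<chi> \<delta>) \<le> Suc i" using h d by auto
    ultimately have "Imp \<chi> \<delta> \<in> th Pi (Suc i) N V a" unfolding th_def by auto
    then have "forces N' V' b (Imp \<chi> \<delta>)" using agree unfolding th_def by auto
    moreover have "forces N' V' y \<chi>" using h(1)[of N' V' y] CD(4) by blast
    ultimately show False using y yd by auto
  qed
qed

lemma back_un:
  assumes fin: "finite (th Pi i N V ` \<Union>(N a))"
    and agree: "th Pi (Suc i) N V a = th Pi (Suc i) N' V' b"
    and y: "y \<in> \<Union>(N' b)"
  shows "\<exists>x\<in>\<Union>(N a). th Pi i N V x = th Pi i N' V' y"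
proof (rule ccontr)
  assume "\<not> ?thesis"
  then have ne: "\<forall>x\<in>\<Union>(N a). th Pi i N V x \<noteq> th Pi i N' V' y" by blast
  obtain C D where CD: "finite C" "finite D"
    "\<forall>\<psi>\<in>C \<union> D. atoms \<psi> \<subseteq> Pi \<and> deg \<psi> \<le> i"
    "\<forall>\<psi>\<in>C. forces N' V' y \<psi>" "\<forall>\<psi>\<in>D. \<not> forces N' V' y \<psi>"
    "\<forall>x\<in>\<Union>(N a). (\<exists>\<psi>\<in>C. \<not> forces N V x \<psi>) \<or> (\<exists>\<psi>\<in>D. forces N V x \<psi>)"
    using back_gen[OF fin ne] by blast
  define \<delta> where "\<delta> = BigOr D"
  have Dok: "\<forall>\<psi>\<in>D. atoms \<psi> \<subseteq> Pi \<and> deg \<psi> \<le> i" using CD(3) by blast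
  have Cok: "\<forall>\<psi>\<in>C. atoms \<psi> \<subseteq> Pi \<and> deg \<psi> \<le> i" using CD(3) by blast
  note d = BigOr[OF CD(2) Dok, folded \<delta>_def]
  have yd: "\<not> forces N' V' y \<delta>" using d(1)[of N' V' y] CD(5) by blast
  show False
  proof (cases "C = {}")
    case True
    then have "forces N V a (Delta \<delta>)" using CD(6) by (simp add: d(1))
    moreover have "atoms (Delta \<delta>) \<subseteq> Pi" "deg (Delta \<delta>) \<le> Suc i" using d by auto
    ultimately have "Delta \<delta> \<in> th Pi (Suc i) N V a" unfolding th_def by auto
    then have "forces N' V' b (Delta \<delta>)" using agree unfolding th_def by auto
    then show False using y yd by auto
  next
    case False
    then obtain c where c: "c \<in> C" by blast
    define \<chi> where "\<chi> = BigAnd c C"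
    note h = BigAnd[OF CD(1) Cok c, folded \<chi>_def]
    have "forces N V a (SImp \<chi> \<delta>)" using CD(6) by (simp add: h(1) d(1))
    moreover have "atoms (SImp \<chi> \<delta>) \<subseteq> Pi" "deg (SImp \<chi> \<delta>) \<le> Suc i" using h d by auto
    ultimately have "SImp \<chi> \<delta> \<in> th Pi (Suc i) N V a" unfolding th_def by auto
    then have "forces N' V' b (SImp \<chi> \<delta>)" using agree unfolding th_def by auto
    moreover have "forces N' V' y \<chi>" using h(1)[of N' V' y] CD(4) by blast
    ultimately show False using y yd by auto
  qed
qed


lemma fin_types:
  assumes fPi: "finite Pi" and m1: "nIML1_model Pi W1 N1 V1" and m2: "nIML1_model Pi W2 N2 V2"
  shows "finite (th Pi i N1 V1 ` W1 \<union> th Pi i N2 V2 ` W2)"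
proof (induct i)
  case 0
  show ?case
  proof (rule fin_factor)
    show "finite (Pow Pi)" using fPi by simp
    show "(\<lambda>x. {q\<in>Pi. x \<in> V1 q}) ` W1 \<subseteq> Pow Pi" "(\<lambda>x. {q\<in>Pi. x \<in> V2 q}) ` W2 \<subseteq> Pow Pi" by auto
  qed (erule th0_eq)+
next
  case (Suc i)
  define \<Theta> where "\<Theta> = th Pi i N1 V1 ` W1 \<union> th Pi i N2 V2 ` W2"
  have k1: "(\<lambda>x. ({q\<in>Pi. x \<in> V1 q}, th Pi i N1 V1 ` \<Inter>(N1 x), th Pi i N1 V1 ` \<Union>(N1 x))) ` W1
      \<subseteq> Pow Pi \<times> Pow \<Theta> \<times> Pow \<Theta>"
    using model_facts[OF m1] unfolding \<Theta>_def by blast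
  have k2: "(\<lambda>x. ({q\<in>Pi. x \<in> V2 q}, th Pi i N2 V2 ` \<Inter>(N2 x), th Pi i N2 V2 ` \<Union>(N2 x))) ` W2
      \<subseteq> Pow Pi \<times> Pow \<Theta> \<times> Pow \<Theta>"
    using model_facts[OF m2] unfolding \<Theta>_def by blast
  have fK: "finite (Pow Pi \<times> Pow \<Theta> \<times> Pow \<Theta>)" using fPi Suc unfolding \<Theta>_def by simp
  show ?case
    by (rule fin_factor[OF fK k1 k2]) (simp only: prod.inject, elim conjE, erule (2) thSuc_eq)+
qed

lemma agree_th:
  "(\<forall>\<phi>. atoms \<phi> \<subseteq> Pi \<and> deg \<phi> \<le> n \<longrightarrow> (forces N1 V1 w1 \<phi> \<longleftrightarrow> forces N2 V2 w2 \<phi>))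
   \<longleftrightarrow> th Pi n N1 V1 w1 = th Pi n N2 V2 w2"
  unfolding th_def by auto

theorem theorem7p4:
  fixes Pi :: "'p set"
    and W1 :: "'a set" and N1 :: "'a \<Rightarrow> 'a set set" and V1 :: "'p \<Rightarrow> 'a set"
    and W2 :: "'b set" and N2 :: "'b \<Rightarrow> 'b set set" and V2 :: "'p \<Rightarrow> 'b set"
    and n :: nat and w1 :: 'a and w2 :: 'b
  assumes "finite Pi"
    and "nIML1_model Pi W1 N1 V1"
    and "nIML1_model Pi W2 N2 V2"
    and "w1 \<in> W1" and "w2 \<in> W2"
  shows "n_bisimilar Pi W1 N1 V1 W2 N2 V2 n w1 w2 \<longleftrightarrow>
         (\<forall>\<phi>. atoms \<phi> \<subseteq> Pi \<and> deg \<phi> \<le> n \<longrightarrow> (forces N1 V1 w1 \<phi> \<longleftrightarrow> forces N2 V2 w2 \<phi>))"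
proof
  assume "n_bisimilar Pi W1 N1 V1 W2 N2 V2 n w1 w2"
  then obtain R :: "nat \<Rightarrow> ('a \<times> 'b) set" where
    R0: "R 0 \<subseteq> W1 \<times> W2" and Rc: "\<forall>i<n. R (Suc i) \<subseteq> R i" and Rn: "(w1, w2) \<in> R n"
    and Rat: "\<forall>x y. (x, y) \<in> R 0 \<longrightarrow> (\<forall>q\<in>Pi. x \<in> V1 q \<longleftrightarrow> y \<in> V2 q)"
    and Rbf: "\<forall>i. i + 1 \<le> n \<longrightarrow> (\<forall>x1 x2. (x1, x2) \<in> R (i + 1) \<longrightarrow>
          (\<forall>y\<in>\<Inter>(N2 x2). \<exists>x\<in>\<Inter>(N1 x1). (x, y) \<in> R i) \<and>
          (\<forall>y\<in>\<Union>(N2 x2). \<exists>x\<in>\<Union>(N1 x1). (x, y) \<in> R i) \<and>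
          (\<forall>x\<in>\<Inter>(N1 x1). \<exists>y\<in>\<Inter>(N2 x2). (x, y) \<in> R i) \<and>
          (\<forall>x\<in>\<Union>(N1 x1). \<exists>y\<in>\<Union>(N2 x2). (x, y) \<in> R i))"
    unfolding n_bisimilar_def by (-, elim exE conjE) iprover
  have sub0: "i \<le> n \<Longrightarrow> R i \<subseteq> R 0" for i
  proof (induct i)
    case (Suc i)
    have "R (Suc i) \<subseteq> R i" using Rc Suc.prems by simp
    then show ?case using Suc by simp
  qed simp
  have bfI: "(\<forall>y'\<in>\<Inter>(N2 y). \<exists>x'\<in>\<Inter>(N1 x). (x', y') \<in> R j) \<and>
                (\<forall>x'\<in>\<Inter>(N1 x). \<exists>y'\<in>\<Inter>(N2 y). (x', y') \<in> R j)"
    if "Suc j \<le> n" "(x, y) \<in> R (Suc j)" for j x y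
  proof -
    have "j + 1 \<le> n" "(x, y) \<in> R (j + 1)" using that by simp_all
    note q = Rbf[rule_format, OF this]
    show ?thesis using q by (elim conjE) (intro conjI)
  qed
  have bfU: "(\<forall>y'\<in>\<Union>(N2 y). \<exists>x'\<in>\<Union>(N1 x). (x', y') \<in> R j) \<and>
                (\<forall>x'\<in>\<Union>(N1 x). \<exists>y'\<in>\<Union>(N2 y). (x', y') \<in> R j)"
    if "Suc j \<le> n" "(x, y) \<in> R (Suc j)" for j x y
  proof -
    have "j + 1 \<le> n" "(x, y) \<in> R (j + 1)" using that by simp_all
    note q = Rbf[rule_format, OF this]
    show ?thesis using q by (elim conjE) (intro conjI)
  qed
  have main: "forces N1 V1 x \<phi> \<longleftrightarrow> forces N2 V2 y \<phi>"
    if "i \<le> n" "(x, y) \<in> R i" "deg \<phi> \<le> i" "atoms \<phi> \<subseteq> Pi" for \<phi> i x y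
    using that
  proof (induct \<phi> arbitrary: i x y)
    case (Atom q)
    have "(x, y) \<in> R 0" using sub0 Atom.prems(1,2) by blast
    moreover have "q \<in> Pi" using Atom.prems(4) by simp
    ultimately show ?case using Rat by simp
  next
    case Bot then show ?case by simp
  next
    case (And a b)
    have "forces N1 V1 x a \<longleftrightarrow> forces N2 V2 y a" using And.hyps(1)[of i x y] And.prems by simp
    moreover have "forces N1 V1 x b \<longleftrightarrow> forces N2 V2 y b" using And.hyps(2)[of i x y] And.prems by simp
    ultimately show ?case by simp
  next
    case (Or a b)
    have "forces N1 V1 x a \<longleftrightarrow> forces N2 V2 y a" using Or.hyps(1)[of i x y] Or.prems by simp
    moreover have "forces N1 V1 x b \<longleftrightarrow> forces N2 V2 y b" using Or.hyps(2)[of i x y] Or.prems by simp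
    ultimately show ?case by simp
  next
    case (Imp a b)
    obtain j where j: "i = Suc j" using Imp.prems(3) by (cases i) auto
    have c: "j \<le> n" "deg a \<le> j" "deg b \<le> j" "atoms a \<subseteq> Pi" "atoms b \<subseteq> Pi" using Imp.prems j by auto
    have bf: "\<forall>y'\<in>\<Inter>(N2 y). \<exists>x'\<in>\<Inter>(N1 x). (x', y') \<in> R j"
      "\<forall>x'\<in>\<Inter>(N1 x). \<exists>y'\<in>\<Inter>(N2 y). (x', y') \<in> R j"
      using bfI[of j x y] Imp.prems j by auto
    have ea: "(x', y') \<in> R j \<Longrightarrow> (forces N1 V1 x' a \<longleftrightarrow> forces N2 V2 y' a)" for x' y'
      using Imp.hyps(1)[of j x' y'] c by blast
    have eb: "(x', y') \<in> R j \<Longrightarrow> (forces N1 V1 x' b \<longleftrightarrow> forces N2 V2 y' b)" for x' y'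
      using Imp.hyps(2)[of j x' y'] c by blast
    show ?case
    proof
      assume L: "forces N1 V1 x (Imp a b)"
      show "forces N2 V2 y (Imp a b)" unfolding forces.simps
      proof (intro ballI)
        fix y' assume "y' \<in> \<Inter>(N2 y)"
        then obtain x' where x': "x' \<in> \<Inter>(N1 x)" "(x', y') \<in> R j" using bf(1) by blast
        then have "\<not> forces N1 V1 x' a \<or> forces N1 V1 x' b" using L x'(1) by (simp only: forces.simps; blast)
        then show "\<not> forces N2 V2 y' a \<or> forces N2 V2 y' b" using ea[OF x'(2)] eb[OF x'(2)] by blast
      qed
    next
      assume L: "forces N2 V2 y (Imp a b)"
      show "forces N1 V1 x (Imp a b)" unfolding forces.simps
      proof (intro ballI)
        fix x' assume "x' \<in> \<Inter>(N1 x)"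
        then obtain y' where y': "y' \<in> \<Inter>(N2 y)" "(x', y') \<in> R j" using bf(2) by blast
        then have "\<not> forces N2 V2 y' a \<or> forces N2 V2 y' b" using L y'(1) by (simp only: forces.simps; blast)
        then show "\<not> forces N1 V1 x' a \<or> forces N1 V1 x' b" using ea[OF y'(2)] eb[OF y'(2)] by blast
      qed
    qed
  next
    case (SImp a b)
    obtain j where j: "i = Suc j" using SImp.prems(3) by (cases i) auto
    have c: "j \<le> n" "deg a \<le> j" "deg b \<le> j" "atoms a \<subseteq> Pi" "atoms b \<subseteq> Pi" using SImp.prems j by auto
    have bf: "\<forall>y'\<in>\<Union>(N2 y). \<exists>x'\<in>\<Union>(N1 x). (x', y') \<in> R j"
      "\<forall>x'\<in>\<Union>(N1 x). \<exists>y'\<in>\<Union>(N2 y). (x', y') \<in> R j"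
      using bfU[of j x y] SImp.prems j by auto
    have ea: "(x', y') \<in> R j \<Longrightarrow> (forces N1 V1 x' a \<longleftrightarrow> forces N2 V2 y' a)" for x' y'
      using SImp.hyps(1)[of j x' y'] c by blast
    have eb: "(x', y') \<in> R j \<Longrightarrow> (forces N1 V1 x' b \<longleftrightarrow> forces N2 V2 y' b)" for x' y'
      using SImp.hyps(2)[of j x' y'] c by blast
    show ?case
    proof
      assume L: "forces N1 V1 x (SImp a b)"
      show "forces N2 V2 y (SImp a b)" unfolding forces.simps
      proof (intro ballI)
        fix y' assume "y' \<in> \<Union>(N2 y)"
        then obtain x' where x': "x' \<in> \<Union>(N1 x)" "(x', y') \<in> R j" using bf(1) by blast
        then have "\<not> forces N1 V1 x' a \<or> forces N1 V1 x' b" using L x'(1) by (simp only: forces.simps; blast)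
        then show "\<not> forces N2 V2 y' a \<or> forces N2 V2 y' b" using ea[OF x'(2)] eb[OF x'(2)] by blast
      qed
    next
      assume L: "forces N2 V2 y (SImp a b)"
      show "forces N1 V1 x (SImp a b)" unfolding forces.simps
      proof (intro ballI)
        fix x' assume "x' \<in> \<Union>(N1 x)"
        then obtain y' where y': "y' \<in> \<Union>(N2 y)" "(x', y') \<in> R j" using bf(2) by blast
        then have "\<not> forces N2 V2 y' a \<or> forces N2 V2 y' b" using L y'(1) by (simp only: forces.simps; blast)
        then show "\<not> forces N1 V1 x' a \<or> forces N1 V1 x' b" using ea[OF y'(2)] eb[OF y'(2)] by blast
      qed
    qed
  next
    case (Delta a)
    obtain j where j: "i = Suc j" using Delta.prems(3) by (cases i) auto
    have c: "j \<le> n" "deg a \<le> j" "atoms a \<subseteq> Pi" using Delta.prems j by auto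
    have bf: "\<forall>y'\<in>\<Union>(N2 y). \<exists>x'\<in>\<Union>(N1 x). (x', y') \<in> R j"
      "\<forall>x'\<in>\<Union>(N1 x). \<exists>y'\<in>\<Union>(N2 y). (x', y') \<in> R j"
      using bfU[of j x y] Delta.prems j by auto
    have ea: "(x', y') \<in> R j \<Longrightarrow> (forces N1 V1 x' a \<longleftrightarrow> forces N2 V2 y' a)" for x' y'
      using Delta.hyps(1)[of j x' y'] c by blast
    show ?case
    proof
      assume L: "forces N1 V1 x (Delta a)"
      show "forces N2 V2 y (Delta a)" unfolding forces.simps
      proof (intro ballI)
        fix y' assume "y' \<in> \<Union>(N2 y)"
        then obtain x' where x': "x' \<in> \<Union>(N1 x)" "(x', y') \<in> R j" using bf(1) by blast
        then have "forces N1 V1 x' a" using L x'(1) by (simp only: forces.simps; blast)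
        then show "forces N2 V2 y' a" using ea[OF x'(2)] by blast
      qed
    next
      assume L: "forces N2 V2 y (Delta a)"
      show "forces N1 V1 x (Delta a)" unfolding forces.simps
      proof (intro ballI)
        fix x' assume "x' \<in> \<Union>(N1 x)"
        then obtain y' where y': "y' \<in> \<Union>(N2 y)" "(x', y') \<in> R j" using bf(2) by blast
        then have "forces N2 V2 y' a" using L y'(1) by (simp only: forces.simps; blast)
        then show "forces N1 V1 x' a" using ea[OF y'(2)] by blast
      qed
    qed
  qed
  show "\<forall>\<phi>. atoms \<phi> \<subseteq> Pi \<and> deg \<phi> \<le> n \<longrightarrow> (forces N1 V1 w1 \<phi> \<longleftrightarrow> forces N2 V2 w2 \<phi>)"
  proof (intro allI impI)
    fix \<phi> assume "atoms \<phi> \<subseteq> Pi \<and> deg \<phi> \<le> n"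
    then show "forces N1 V1 w1 \<phi> \<longleftrightarrow> forces N2 V2 w2 \<phi>"
      using main[of n w1 w2 \<phi>] Rn by simp
  qed
next
  assume "\<forall>\<phi>. atoms \<phi> \<subseteq> Pi \<and> deg \<phi> \<le> n \<longrightarrow> (forces N1 V1 w1 \<phi> \<longleftrightarrow> forces N2 V2 w2 \<phi>)"
  then have agn: "th Pi n N1 V1 w1 = th Pi n N2 V2 w2" by (simp only: agree_th[symmetric])
  define R where "R i = {(x, y). x \<in> W1 \<and> y \<in> W2 \<and> th Pi i N1 V1 x = th Pi i N2 V2 y}" for i
  note mf1 = model_facts[OF assms(2)] and mf2 = model_facts[OF assms(3)]
  have fin1: "finite (th Pi i N1 V1 ` \<Union>(N1 x))" if "x \<in> W1" for i x
    using fin_types[OF assms(1-3), of i] mf1(2)[OF that] by (meson finite_Un finite_subset image_mono)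
  have fin2: "finite (th Pi i N2 V2 ` \<Union>(N2 x))" if "x \<in> W2" for i x
    using fin_types[OF assms(1-3), of i] mf2(2)[OF that] by (meson finite_Un finite_subset image_mono)
  have fin1i: "finite (th Pi i N1 V1 ` \<Inter>(N1 x))" if "x \<in> W1" for i x
    using fin1[OF that, of i] mf1(4)[OF that] by (meson finite_subset image_mono)
  have fin2i: "finite (th Pi i N2 V2 ` \<Inter>(N2 x))" if "x \<in> W2" for i x
    using fin2[OF that, of i] mf2(4)[OF that] by (meson finite_subset image_mono)
  show "n_bisimilar Pi W1 N1 V1 W2 N2 V2 n w1 w2"
    unfolding n_bisimilar_def
  proof (rule exI[of _ R], intro conjI allI impI ballI)
    show "R 0 \<subseteq> W1 \<times> W2" unfolding R_def by blast
    show "(w1, w2) \<in> R n" unfolding R_def using agn assms(4,5) by simp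
  next
    fix i assume "i < n"
    show "R (Suc i) \<subseteq> R i"
    proof
      fix p assume "p \<in> R (Suc i)"
      then obtain x y where p: "p = (x, y)" "x \<in> W1" "y \<in> W2" "th Pi (Suc i) N1 V1 x = th Pi (Suc i) N2 V2 y"
        unfolding R_def by blast
      have "th Pi i N1 V1 x = th Pi i N2 V2 y" using p(4) by (rule th_down)
      then show "p \<in> R i" unfolding R_def using p(1-3) by simp
    qed
  next
    fix x y q assume h: "(x, y) \<in> R 0" "q \<in> Pi"
    then have "th Pi 0 N1 V1 x = th Pi 0 N2 V2 y" unfolding R_def by simp
    moreover have "Atom q \<in> th Pi 0 N1 V1 x \<longleftrightarrow> x \<in> V1 q" "Atom q \<in> th Pi 0 N2 V2 y \<longleftrightarrow> y \<in> V2 q"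
      using h(2) unfolding th_def by auto
    ultimately show "x \<in> V1 q \<longleftrightarrow> y \<in> V2 q" by simp
  next
    fix i x1 x2 y assume h: "i + 1 \<le> n" "(x1, x2) \<in> R (i + 1)" "y \<in> \<Inter>(N2 x2)"
    then have x: "x1 \<in> W1" "x2 \<in> W2" "th Pi (Suc i) N1 V1 x1 = th Pi (Suc i) N2 V2 x2" unfolding R_def by simp_all
    obtain x where xx: "x \<in> \<Inter>(N1 x1)" "th Pi i N1 V1 x = th Pi i N2 V2 y"
      using back_int[OF assms(3) x(2) mf1(3)[OF x(1)] fin1i[OF x(1)] x(3) h(3)] by blast
    have "x \<in> W1" "y \<in> W2" using mf1(1)[OF x(1)] mf2(1)[OF x(2)] xx(1) h(3) by blast+
    then have "(x, y) \<in> R i" unfolding R_def using xx(2) by simp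
    then show "\<exists>x\<in>\<Inter>(N1 x1). (x, y) \<in> R i" using xx(1) by blast
  next
    fix i x1 x2 y assume h: "i + 1 \<le> n" "(x1, x2) \<in> R (i + 1)" "y \<in> \<Union>(N2 x2)"
    then have x: "x1 \<in> W1" "x2 \<in> W2" "th Pi (Suc i) N1 V1 x1 = th Pi (Suc i) N2 V2 x2" unfolding R_def by simp_all
    obtain x where xx: "x \<in> \<Union>(N1 x1)" "th Pi i N1 V1 x = th Pi i N2 V2 y"
      using back_un[OF fin1[OF x(1)] x(3) h(3)] by blast
    have "x \<in> W1" "y \<in> W2" using mf1(2)[OF x(1)] mf2(2)[OF x(2)] xx(1) h(3) by blast+
    then have "(x, y) \<in> R i" unfolding R_def using xx(2) by simp
    then show "\<exists>x\<in>\<Union>(N1 x1). (x, y) \<in> R i" using xx(1) by blast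
  next
    fix i x1 x2 x assume h: "i + 1 \<le> n" "(x1, x2) \<in> R (i + 1)" "x \<in> \<Inter>(N1 x1)"
    then have x: "x1 \<in> W1" "x2 \<in> W2" "th Pi (Suc i) N2 V2 x2 = th Pi (Suc i) N1 V1 x1" unfolding R_def by simp_all
    obtain y where yy: "y \<in> \<Inter>(N2 x2)" "th Pi i N2 V2 y = th Pi i N1 V1 x"
      using back_int[OF assms(2) x(1) mf2(3)[OF x(2)] fin2i[OF x(2)] x(3) h(3)] by blast
    have "x \<in> W1" "y \<in> W2" using mf1(1)[OF x(1)] mf2(1)[OF x(2)] yy(1) h(3) by blast+
    then have "(x, y) \<in> R i" unfolding R_def using yy(2) by simp
    then show "\<exists>y\<in>\<Inter>(N2 x2). (x, y) \<in> R i" using yy(1) by blast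
  next
    fix i x1 x2 x assume h: "i + 1 \<le> n" "(x1, x2) \<in> R (i + 1)" "x \<in> \<Union>(N1 x1)"
    then have x: "x1 \<in> W1" "x2 \<in> W2" "th Pi (Suc i) N2 V2 x2 = th Pi (Suc i) N1 V1 x1" unfolding R_def by simp_all
    obtain y where yy: "y \<in> \<Union>(N2 x2)" "th Pi i N2 V2 y = th Pi i N1 V1 x"
      using back_un[OF fin2[OF x(2)] x(3) h(3)] by blast
    have "x \<in> W1" "y \<in> W2" using mf1(2)[OF x(1)] mf2(2)[OF x(2)] yy(1) h(3) by blast+
    then have "(x, y) \<in> R i" unfolding R_def using yy(2) by simp
    then show "\<exists>y\<in>\<Union>(N2 x2). (x, y) \<in> R i" using yy(1) by blast
  qed
qed

end
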